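(* Let $n$ and $m$ be non-negative integers with $m\leq\binom{n}{2}$. Let $d$ and $\ell$ be the unique integers with $m=\binom{d}{2}+\ell$, $d\geq 1$ and $0\leq \ell\leq d-1$. Then the maximum of $c(G)$ over all graphs $G$ with $n$ vertices and $m$ edges equals $2^d+2^\ell+n-d-1$.
   Context: All graphs are finite, simple and undirected. A clique of a graph $G$ is a (possibly empty) set of pairwise adjacent vertices; in particular $\emptyset$ is a clique, every single vertex is a clique, and every edge is a clique. $c(G)$ denotes the number of cliques of $G$. *)

theory Defs
  imports Main
begin

definition simple_graph :: "'a set \<Rightarrow> 'a set set \<Rightarrow> bool" where
  "simple_graph V E \<longleftrightarrow> finite V \<and> (\<forall>e\<in>E. e \<subseteq> V \<and> card e = 2)"

text \<open>Cliques (including the empty set): sets of pairwise adjacent vertices.\<close>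
definition cliques :: "'a set \<Rightarrow> 'a set set \<Rightarrow> 'a set set" where
  "cliques V E = {S. S \<subseteq> V \<and> (\<forall>x\<in>S. \<forall>y\<in>S. x \<noteq> y \<longrightarrow> {x, y} \<in> E)}"

definition num_cliques :: "'a set \<Rightarrow> 'a set set \<Rightarrow> nat" where
  "num_cliques V E = card (cliques V E)"

end

theory Submission imports Defs begin

definition nbr :: "'a set \<Rightarrow> 'a set set \<Rightarrow> 'a \<Rightarrow> 'a set" where
  "nbr V E v = {u\<in>V. {u,v} \<in> E}"

lemma card_filter_sum: "finite A \<Longrightarrow> card {x\<in>A. P x} = (\<Sum>x\<in>A. if P x then 1 else (0::nat))"
  using sum.inter_filter[of A "\<lambda>_. (1::nat)" P] by simp

lemma handshake:
  assumes "simple_graph V E"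
  shows "(\<Sum>u\<in>V. card {e\<in>E. u\<in>e}) = 2 * card E"
proof -
  have fV: "finite V" using assms unfolding simple_graph_def by auto
  have fE: "finite E"
    by (rule finite_subset[of E "Pow V"]) (use assms fV in \<open>auto simp: simple_graph_def\<close>)
  have "(\<Sum>u\<in>V. card {e\<in>E. u\<in>e}) = (\<Sum>u\<in>V. \<Sum>e\<in>E. if u \<in> e then 1 else (0::nat))"
    using fE by (simp add: card_filter_sum)
  also have "\<dots> = (\<Sum>e\<in>E. \<Sum>u\<in>V. if u \<in> e then 1 else (0::nat))"
    by (rule sum.swap)
  also have "\<dots> = (\<Sum>e\<in>E. card {u\<in>V. u\<in>e})"
    using fV by (simp add: card_filter_sum)
  also have "\<dots> = (\<Sum>e\<in>E. 2)"
  proof (rule sum.cong)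
    fix e assume "e \<in> E"
    then have "{u\<in>V. u\<in>e} = e" "card e = 2" using assms unfolding simple_graph_def by auto
    then show "card {u\<in>V. u\<in>e} = 2" by simp
  qed simp
  finally show ?thesis by simp
qed

lemma deg_nbr:
  assumes "simple_graph V E"
  shows "card {e\<in>E. v\<in>e} = card (nbr V E v)"
proof -
  have "bij_betw (\<lambda>u. {u,v}) (nbr V E v) {e\<in>E. v\<in>e}"
  proof (rule bij_betwI')
    fix x y assume "x \<in> nbr V E v" "y \<in> nbr V E v"
    show "({x, v} = {y, v}) = (x = y)" by (auto simp: doubleton_eq_iff)
  next
    fix x assume "x \<in> nbr V E v" then show "{x, v} \<in> {e \<in> E. v \<in> e}" by (auto simp: nbr_def)
  next
    fix e assume e: "e \<in> {e \<in> E. v \<in> e}"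
    then have "card e = 2" "e \<subseteq> V" using assms unfolding simple_graph_def by auto
    then obtain x y where xy: "e = {x,y}" "x \<noteq> y" by (auto simp: card_2_iff)
    show "\<exists>x\<in>nbr V E v. e = {x, v}"
    proof (cases "v = x")
      case True
      then show ?thesis using e xy \<open>e \<subseteq> V\<close> by (auto simp: nbr_def insert_commute intro!: bexI[of _ y])
    next
      case False
      then have "v = y" using e xy by auto
      then show ?thesis using e xy \<open>e \<subseteq> V\<close> by (auto simp: nbr_def intro!: bexI[of _ x])
    qed
  qed
  then show ?thesis by (simp add: bij_betw_same_card)
qed

lemma pow_ineq: "(2::int)^a + 2^b \<le> 2^(a+b) + 1"
proof -
  have "0 \<le> ((2::int)^a - 1) * (2^b - 1)" by simp
  then show ?thesis by (simp add: power_add algebra_simps)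
qed

lemma pow_ineq2:
  assumes "a \<le> x" "x \<le> b"
  shows "(2::int)^(a+b-x) + 2^x \<le> 2^a + 2^b"
proof -
  obtain p q where pq: "x = a + p" "b = x + q" using assms le_Suc_ex by blast
  have "a + b - x = a + q" using pq by simp
  have "(2::int)^q + 2^p \<le> 2^(q+p) + 1" by (rule pow_ineq)
  then have "(2::int)^a * (2^q + 2^p) \<le> 2^a * (2^(q+p) + 1)" by simp
  then show ?thesis using pq \<open>a + b - x = a + q\<close> by (simp add: power_add algebra_simps)
qed

lemma choose2_Suc: "Suc k choose 2 = (k choose 2) + k"
  using binomial_Suc_Suc[of k 1] by (simp add: numeral_2_eq_2)

lemma choose2_double: "2 * (k choose 2) = k * (k - 1)"
  by (induction k) (auto simp: choose2_Suc algebra_simps)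


lemma int_lt_pow2: "int k < (2::int)^k"
proof (induction k)
  case (Suc k)
  have "(1::int) \<le> 2^k" by simp
  moreover have "(2::int)^Suc k = 2^k + 2^k" by simp
  ultimately show ?case using Suc.IH by linarith
qed simp

lemma cliques_empty: "cliques {} E = {{}}"
  by (auto simp: cliques_def)

lemma upper:
  assumes "simple_graph V E" "card E = (d choose 2) + l" "1 \<le> d" "l \<le> d - 1"
  shows "int (card (cliques V E)) \<le> 1 + int (card V) + 2^d + 2^l - int d - 2"
  using assms
proof (induction "card V" arbitrary: V E d l rule: less_induct)
  case less
  have fV: "finite V" using less.prems unfolding simple_graph_def by auto
  have base: "(0::int) \<le> 2^d + 2^l - int d - 2"
  proof -
    have "int d < 2^d" by (rule int_lt_pow2)
    moreover have "(1::int) \<le> 2^l" by simp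
    ultimately show ?thesis by linarith
  qed
  show ?case
  proof (cases "V = {}")
    case True
    then show ?thesis using base by (simp add: cliques_empty)
  next
    case False
    define deg where "deg u = card (nbr V E u)" for u
    define \<delta> where "\<delta> = Min (deg ` V)"
    have "\<delta> \<in> deg ` V" unfolding \<delta>_def using False fV by (simp add: Min_in)
    then obtain v where v: "v \<in> V" "deg v = \<delta>" by auto
    have mind: "\<And>u. u \<in> V \<Longrightarrow> \<delta> \<le> deg u" unfolding \<delta>_def using fV by simp
    have hs: "(\<Sum>u\<in>V. deg u) = 2 * card E"
      using handshake[OF less.prems(1)] deg_nbr[OF less.prems(1)] by (simp add: deg_def)
    have "(\<Sum>u\<in>V. \<delta>) \<le> (\<Sum>u\<in>V. deg u)" by (rule sum_mono) (rule mind)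
    then have cV: "card V * \<delta> \<le> 2 * card E" using hs by simp
    have nsub: "nbr V E v \<subseteq> V - {v}"
      using less.prems(1) by (auto simp: nbr_def simple_graph_def)
    then have "\<delta> \<le> card V - 1" using v fV
      by (metis card_Diff_singleton card_mono finite_Diff deg_def)
    moreover have "card V > 0" using fV False by (simp add: card_gt_0_iff)
    ultimately have "\<delta> + 1 \<le> card V" by linarith
    then have "(\<delta> + 1) * \<delta> \<le> card V * \<delta>" by (rule mult_le_mono1)
    then have dd: "(\<delta> + 1) * \<delta> \<le> d * (d - 1) + 2 * l"
      using cV less.prems(2) choose2_double[of d] by (simp add: algebra_simps)
    have dlt: "\<delta> \<le> d - 1"
    proof (rule ccontr)
      assume "\<not> \<delta> \<le> d - 1"
      then have "d \<le> \<delta>" using less.prems(3) by simp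
      then have "(d+1) * d \<le> (\<delta> + 1) * \<delta>" by (intro mult_le_mono) auto
      moreover have "(d+1) * d = d * (d - 1) + 2 * d" using less.prems(3)
        by (cases d) (auto simp: algebra_simps)
      ultimately show False using dd less.prems(4) less.prems(3) by linarith
    qed
    define V' where "V' = V - {v}"
    define E' where "E' = {e\<in>E. v \<notin> e}"
    have sg': "simple_graph V' E'" using less.prems(1)
      by (auto simp: simple_graph_def V'_def E'_def)
    have fE: "finite E"
      by (rule finite_subset[of E "Pow V"]) (use less.prems(1) fV in \<open>auto simp: simple_graph_def\<close>)
    have Esplit: "E = E' \<union> {e\<in>E. v\<in>e}" "E' \<inter> {e\<in>E. v\<in>e} = {}" by (auto simp: E'_def)
    have "card E = card E' + \<delta>"
      using card_Un_disjoint[of E' "{e\<in>E. v\<in>e}"] Esplit fE deg_nbr[OF less.prems(1), of v] v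
      by (simp add: deg_def E'_def)
    then have cE': "card E' = (d choose 2) + l - \<delta>" using less.prems(2) by simp
    have cV': "card V' < card V" unfolding V'_def using v fV \<open>card V > 0\<close> by simp
    have csub: "cliques V E \<subseteq> cliques V' E' \<union> insert v ` Pow (nbr V E v)"
    proof
      fix S assume S: "S \<in> cliques V E"
      show "S \<in> cliques V' E' \<union> insert v ` Pow (nbr V E v)"
      proof (cases "v \<in> S")
        case True
        have "S - {v} \<subseteq> nbr V E v"
          using S True by (auto simp: cliques_def nbr_def insert_commute)
        moreover have "S = insert v (S - {v})" using True by auto
        ultimately show ?thesis by blast
      next
        case False
        then have "S \<in> cliques V' E'" using S by (auto simp: cliques_def V'_def E'_def)
        then show ?thesis by blast
      qed
    qed
    have fN: "finite (nbr V E v)" using fV by (simp add: nbr_def)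
    have fC: "finite (cliques V' E')" using fV by (simp add: cliques_def V'_def)
    have "card (cliques V E) \<le> card (cliques V' E' \<union> insert v ` Pow (nbr V E v))"
      using csub fC fN by (intro card_mono) auto
    also have "\<dots> \<le> card (cliques V' E') + card (insert v ` Pow (nbr V E v))"
      by (rule card_Un_le)
    also have "\<dots> \<le> card (cliques V' E') + 2 ^ \<delta>"
      using card_image_le[of "Pow (nbr V E v)" "insert v"] fN card_Pow[of "nbr V E v"] v
      by (simp add: deg_def)
    finally have step: "int (card (cliques V E)) \<le> int (card (cliques V' E')) + 2 ^ \<delta>"
      by (metis of_nat_add of_nat_le_iff of_nat_numeral of_nat_power)
    have cVV: "int (card V') = int (card V) - 1" unfolding V'_def using v fV \<open>card V > 0\<close> by simp
    show ?thesis
    proof (cases "\<delta> \<le> l")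
      case True
      have IH: "int (card (cliques V' E')) \<le> 1 + int (card V') + 2^d + 2^(l-\<delta>) - int d - 2"
        using less.hyps[OF cV' sg' _ less.prems(3)] cE' True less.prems(4) by simp
      have "(2::int)^(l-\<delta>) + 2^\<delta> \<le> 2^(l-\<delta>+\<delta>) + 1" by (rule pow_ineq)
      then show ?thesis using IH step cVV True by simp
    next
      case False
      have d2: "2 \<le> d" using False dlt by simp
      have cE'': "card E' = ((d-1) choose 2) + (l + (d-1) - \<delta>)"
        using cE' choose2_Suc[of "d-1"] d2 False dlt by simp
      have IH: "int (card (cliques V' E')) \<le> 1 + int (card V') + 2^(d-1) + 2^(l + (d-1) - \<delta>) - int (d-1) - 2"
        using less.hyps[OF cV' sg' cE''] d2 False dlt by simp
      have "(2::int)^(l + (d-1) - \<delta>) + 2^\<delta> \<le> 2^l + 2^(d-1)"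
        by (rule pow_ineq2) (use False dlt in auto)
      moreover have "(2::int)^d = 2 * 2^(d-1)" proof -
        have "d = Suc (d-1)" using d2 by simp
        then show ?thesis by (metis power_Suc)
      qed
      ultimately show ?thesis using IH step cVV d2 by simp
    qed
  qed
qed


definition E0 :: "nat \<Rightarrow> nat \<Rightarrow> nat set set" where
  "E0 d l = {S. S \<subseteq> {0..<d} \<and> card S = 2} \<union> (\<lambda>i. {i,d}) ` {0..<l}"

lemma E0_card:
  assumes "l \<le> d - 1"
  shows "card (E0 d l) = (d choose 2) + l"
proof -
  have c1: "card {S. S \<subseteq> {0..<d} \<and> card S = 2} = d choose 2"
    using n_subsets[of "{0..<d}" 2] by simp
  have inj: "inj_on (\<lambda>i. {i,d}) {0..<l}" by (auto simp: inj_on_def doubleton_eq_iff)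
  have c2: "card ((\<lambda>i. {i,d}) ` {0..<l}) = l" using card_image[OF inj] by simp
  have disj: "{S. S \<subseteq> {0..<d} \<and> card S = 2} \<inter> (\<lambda>i. {i,d}) ` {0..<l} = {}" by auto
  have f1: "finite {S. S \<subseteq> {0..<d} \<and> card S = 2}" by simp
  show ?thesis unfolding E0_def using card_Un_disjoint[OF f1 _ disj] c1 c2 by simp
qed

lemma E0_sg:
  assumes "l \<le> d - 1" "d \<le> n" "0 < l \<Longrightarrow> d < n"
  shows "simple_graph {0..<n} (E0 d l)"
proof -
  have "e \<subseteq> {0..<n} \<and> card e = 2" if e: "e \<in> E0 d l" for e
  proof (cases "e \<in> {S. S \<subseteq> {0..<d} \<and> card S = 2}")
    case True then show ?thesis using assms by auto
  next
    case False
    then have "e \<in> (\<lambda>i. {i, d}) ` {0..<l}" using e unfolding E0_def by blast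
    then obtain i where i: "i < l" "e = {i,d}" by auto
    then have "0 < l" by simp
    then show ?thesis using i assms by auto
  qed
  then show ?thesis unfolding simple_graph_def by auto
qed

lemma clA: "d \<le> n \<Longrightarrow> Pow {0..<d} \<subseteq> cliques {0..<n} (E0 d l)"
  by (auto simp: cliques_def E0_def card_2_iff)

lemma clB:
  assumes "l \<le> d - 1" "d < n"
  shows "insert d ` Pow {0..<l} \<subseteq> cliques {0..<n} (E0 d l)"
proof
  fix S assume "S \<in> insert d ` Pow {0..<l}"
  then obtain T where T: "T \<subseteq> {0..<l}" "S = insert d T" by auto
  have Sn: "S \<subseteq> {0..<n}" using T assms by auto
  have "\<forall>x\<in>S. \<forall>y\<in>S. x \<noteq> y \<longrightarrow> {x, y} \<in> E0 d l"
  proof (intro ballI impI)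
    fix x y assume xy: "x \<in> S" "y \<in> S" "x \<noteq> y"
    show "{x, y} \<in> E0 d l"
    proof (cases "x = d")
      case True
      then have "y \<in> T" "y < l" using xy T by auto
      then show ?thesis using True unfolding E0_def by (auto simp: insert_commute)
    next
      case False
      then have x: "x \<in> T" "x < l" using xy T by auto
      show ?thesis
      proof (cases "y = d")
        case True then show ?thesis using x unfolding E0_def by auto
      next
        case False
        then have "y \<in> T" using xy T by auto
        then have "{x,y} \<subseteq> {0..<d}" "card {x,y} = 2" using x T xy assms by auto
        then show ?thesis unfolding E0_def by auto
      qed
    qed
  qed
  then show "S \<in> cliques {0..<n} (E0 d l)" using Sn by (simp add: cliques_def)
qed

lemma clC: "(\<lambda>v. {v}) ` {d+1..<n} \<subseteq> cliques {0..<n} (E0 d l)"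
  by (auto simp: cliques_def)

theorem theorem2:
  fixes n m d l :: nat
  assumes "m \<le> n choose 2"
    and "m = (d choose 2) + l" and "d \<ge> 1" and "l \<le> d - 1"
  shows "int (Max {num_cliques {0..<n} E | E. simple_graph {0..<n} E \<and> card E = m})
           = 2 ^ d + 2 ^ l + int n - int d - 1"
proof -
  define M where "M = {num_cliques {0..<n} E | E. simple_graph {0..<n} E \<and> card E = m}"
  have Msub: "M \<subseteq> num_cliques {0..<n} ` Pow (Pow {0..<n})"
    unfolding M_def simple_graph_def by auto
  have fM: "finite M" by (rule finite_subset[OF Msub]) simp
  have ub: "\<And>x. x \<in> M \<Longrightarrow> int x \<le> 2 ^ d + 2 ^ l + int n - int d - 1"
  proof -
    fix x assume "x \<in> M"
    then obtain E where E: "x = num_cliques {0..<n} E" "simple_graph {0..<n} E" "card E = m"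
      unfolding M_def by auto
    show "int x \<le> 2 ^ d + 2 ^ l + int n - int d - 1"
      using upper[OF E(2) _ assms(3) assms(4)] E assms(2) by (simp add: num_cliques_def)
  qed
  have lb: "\<exists>x\<in>M. 2 ^ d + 2 ^ l + int n - int d - 1 \<le> int x"
  proof (cases "n = 0")
    case True
    then have "m = 0" using assms(1) True binomial_eq_0[of 0 2] by simp
    then have "l = 0" "d choose 2 = 0" using assms(2) by auto
    then have "d = 1" using assms(3) choose2_double[of d] by (cases d) auto
    have "simple_graph {0..<n} {}" by (simp add: simple_graph_def)
    then have "num_cliques {0..<n} {} \<in> M" unfolding M_def using \<open>m = 0\<close> by auto
    moreover have "num_cliques {0..<n} {} = 1" using True by (simp add: num_cliques_def cliques_empty)
    ultimately show ?thesis using True \<open>l = 0\<close> \<open>d = 1\<close> by force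
  next
    case False
    have h1: "d * (d - 1) + 2 * l \<le> n * (n - 1)"
      using assms(1,2) choose2_double[of d] choose2_double[of n] by linarith
    have dn: "d < n \<or> (d = n \<and> l = 0)"
    proof (rule ccontr)
      assume nc: "\<not> (d < n \<or> (d = n \<and> l = 0))"
      show False
      proof (cases "d = n")
        case True then show False using nc h1 by simp
      next
        case False
        then have "n + 1 \<le> d" using nc by simp
        then have "(n+1) * n \<le> d * (d - 1)" by (intro mult_le_mono) auto
        moreover have "n * (n - 1) < (n+1) * n" using \<open>n \<noteq> 0\<close> by (cases n) auto
        ultimately show False using h1 by linarith
      qed
    qed
    have sg: "simple_graph {0..<n} (E0 d l)" using E0_sg[OF assms(4)] dn by auto
    have inM: "num_cliques {0..<n} (E0 d l) \<in> M"
      unfolding M_def using sg E0_card[OF assms(4)] assms(2) by auto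
    have fC: "finite (cliques {0..<n} (E0 d l))" by (simp add: cliques_def)
    show ?thesis
    proof (cases "d < n")
      case False
      then have "d = n" "l = 0" using dn by auto
      have "card (Pow {0..<d}) \<le> num_cliques {0..<n} (E0 d l)"
        unfolding num_cliques_def using clA[of d n l] \<open>d = n\<close> fC by (intro card_mono) auto
      then have "2 ^ d \<le> num_cliques {0..<n} (E0 d l)" by (simp add: card_Pow)
      then have "(2::int) ^ d \<le> int (num_cliques {0..<n} (E0 d l))"
        by (metis of_nat_le_iff of_nat_numeral of_nat_power)
      then show ?thesis using inM \<open>d = n\<close> \<open>l = 0\<close> by force
    next
      case True
      define A where "A = Pow {0..<d}"
      define B where "B = insert d ` Pow {0..<l}"
      define C where "C = (\<lambda>v. {v}) ` {d+1..<n}"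
      have sub: "A \<union> B \<union> C \<subseteq> cliques {0..<n} (E0 d l)"
        using clA[of d n l] clB[OF assms(4) True] clC[of d n l] True unfolding A_def B_def C_def by auto
      have ld: "l < d" using assms(3,4) by simp
      have cA: "card A = 2^d" unfolding A_def by (simp add: card_Pow)
      have injB: "inj_on (insert d) (Pow {0..<l})"
        using ld by (auto simp: inj_on_def) (metis atLeastLessThan_iff insert_absorb insert_ident less_trans order_less_irrefl subsetD)+
      have cB: "card B = 2^l" unfolding B_def using card_image[OF injB] by (simp add: card_Pow)
      have cC: "card C = n - d - 1" unfolding C_def by (subst card_image) (auto simp: inj_on_def)
      have dAB: "A \<inter> B = {}" unfolding A_def B_def by auto
      have dABC: "(A \<union> B) \<inter> C = {}" unfolding A_def B_def C_def by auto
      have fin: "finite A" "finite B" "finite C" unfolding A_def B_def C_def by auto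
      have "card (A \<union> B \<union> C) = 2^d + 2^l + (n - d - 1)"
        using card_Un_disjoint[OF _ _ dABC] card_Un_disjoint[OF _ _ dAB] fin cA cB cC by simp
      moreover have "card (A \<union> B \<union> C) \<le> num_cliques {0..<n} (E0 d l)"
        unfolding num_cliques_def using sub fC by (rule card_mono[rotated])
      ultimately have "2^d + 2^l + (n - d - 1) \<le> num_cliques {0..<n} (E0 d l)" by simp
      then have "int (2^d + 2^l + (n - d - 1)) \<le> int (num_cliques {0..<n} (E0 d l))"
        by (simp only: of_nat_le_iff)
      moreover have "int (2^d + 2^l + (n - d - 1)) = 2 ^ d + 2 ^ l + int n - int d - 1"
        using True by simp
      ultimately show ?thesis using inM by force
    qed
  qed
  have ne: "M \<noteq> {}" using lb by auto
  have "Max M \<in> M" using fM ne by (rule Max_in)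
  then have "int (Max M) \<le> 2 ^ d + 2 ^ l + int n - int d - 1" by (rule ub)
  moreover obtain x where "x \<in> M" "2 ^ d + 2 ^ l + int n - int d - 1 \<le> int x" using lb by blast
  moreover have "x \<le> Max M" using fM \<open>x \<in> M\<close> by simp
  ultimately show ?thesis unfolding M_def by linarith
qed

end
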